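(* Let $X$ be a (Tychonoff) space. (a) If $X$ is a finite $C$-space and $Y\subset X$ is $C^*$-embedded in $X$, then $Y$ is a finite $C$-space. (b) $X$ is a finite $C$-space if and only if its Čech–Stone compactification $\beta X$ is a $C$-space.
   Context: A set is functionally open if it is a cozero set. $Y\subset X$ is $C^*$-embedded if every bounded continuous real function on $Y$ extends to a bounded continuous function on $X$. $X$ is a $C$-space if every sequence $\{\omega_n\}$ of locally finite covers of $X$ by functionally open sets has a $C$-refinement $\{\gamma_n\}$ (each $\gamma_n$ a disjoint family of open sets refining $\omega_n$, with $\bigcup_n\gamma_n$ covering $X$) such that $\bigcup_n\gamma_n$ is a locally finite cover of $X$ by functionally open sets. $X$ is a finite $C$-space if for every sequence $\{\omega_n\}$ of finite covers of $X$ by functionally open sets there exist $k$ and finite families $\gamma_1,\dots,\gamma_k$ of pairwise disjoint functionally open sets such that each $\gamma_n$ refines $\omega_n$ and $\bigcup_{n=1}^k\gamma_n$ covers $X$. *)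

theory Defs
  imports "HOL-Analysis.Analysis"
begin

definition Tychonoff_space :: "'a topology \<Rightarrow> bool" where
  "Tychonoff_space X \<longleftrightarrow> completely_regular_space X \<and> Hausdorff_space X"

definition functionally_open :: "'a topology \<Rightarrow> 'a set \<Rightarrow> bool" where
  "functionally_open X U \<longleftrightarrow>
     (\<exists>f. continuous_map X euclideanreal f \<and> U = {x \<in> topspace X. f x \<noteq> 0})"

definition fo_cover :: "'a topology \<Rightarrow> 'a set set \<Rightarrow> bool" where
  "fo_cover X \<U> \<longleftrightarrow> (\<forall>U\<in>\<U>. functionally_open X U) \<and> \<Union>\<U> = topspace X"

definition refines :: "'a set set \<Rightarrow> 'a set set \<Rightarrow> bool" where
  "refines \<G> \<W> \<longleftrightarrow> (\<forall>G\<in>\<G>. \<exists>W\<in>\<W>. G \<subseteq> W)"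

definition C_star_embedded :: "'a topology \<Rightarrow> 'a set \<Rightarrow> bool" where
  "C_star_embedded X Y \<longleftrightarrow> Y \<subseteq> topspace X \<and>
     (\<forall>f. continuous_map (subtopology X Y) euclideanreal f \<and> bounded (f ` Y) \<longrightarrow>
        (\<exists>g. continuous_map X euclideanreal g \<and> bounded (g ` topspace X) \<and>
             (\<forall>y\<in>Y. g y = f y)))"

definition C_space :: "'a topology \<Rightarrow> bool" where
  "C_space X \<longleftrightarrow>
    (\<forall>\<omega> :: nat \<Rightarrow> 'a set set.
       (\<forall>n. fo_cover X (\<omega> n) \<and> locally_finite_in X (\<omega> n)) \<longrightarrow>
       (\<exists>\<gamma> :: nat \<Rightarrow> 'a set set.
          (\<forall>n. pairwise disjnt (\<gamma> n) \<and> (\<forall>G\<in>\<gamma> n. openin X G) \<and> refines (\<gamma> n) (\<omega> n)) \<and>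
          fo_cover X (\<Union>n. \<gamma> n) \<and> locally_finite_in X (\<Union>n. \<gamma> n)))"

definition finite_C_space :: "'a topology \<Rightarrow> bool" where
  "finite_C_space X \<longleftrightarrow>
    (\<forall>\<omega> :: nat \<Rightarrow> 'a set set.
       (\<forall>n. finite (\<omega> n) \<and> fo_cover X (\<omega> n)) \<longrightarrow>
       (\<exists>k. \<exists>\<gamma> :: nat \<Rightarrow> 'a set set.
          (\<forall>n<k. finite (\<gamma> n) \<and> pairwise disjnt (\<gamma> n) \<and>
                 (\<forall>G\<in>\<gamma> n. functionally_open X G) \<and> refines (\<gamma> n) (\<omega> n)) \<and>
          (\<Union>n<k. \<Union>(\<gamma> n)) = topspace X))"

definition Cech_Stone_compactification ::
    "'a topology \<Rightarrow> 'b topology \<Rightarrow> ('a \<Rightarrow> 'b) \<Rightarrow> bool" where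
  "Cech_Stone_compactification X K e \<longleftrightarrow>
     compact_space K \<and> Hausdorff_space K \<and> embedding_map X K e \<and>
     K closure_of (e ` topspace X) = topspace K \<and>
     (\<forall>f. continuous_map X euclideanreal f \<and> bounded (f ` topspace X) \<longrightarrow>
        (\<exists>g. continuous_map K euclideanreal g \<and> (\<forall>x\<in>topspace X. g (e x) = f x)))"

end

theory Submission
  imports Defs
begin

lemma fo_intro:
  "continuous_map X euclideanreal f \<Longrightarrow> functionally_open X {x \<in> topspace X. f x \<noteq> 0}"
  unfolding functionally_open_def by blast

lemma fo_open:
  assumes "functionally_open X U" shows "openin X U"
proof -
  obtain f where f: "continuous_map X euclideanreal f" "U = {x \<in> topspace X. f x \<noteq> 0}"
    using assms unfolding functionally_open_def by blast
  have "openin X {x \<in> topspace X. f x \<in> - {0}}"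
    by (rule openin_continuous_map_preimage[OF f(1)]) auto
  then show ?thesis using f(2) by simp
qed

lemma fo_subset: "functionally_open X U \<Longrightarrow> U \<subseteq> topspace X"
  unfolding functionally_open_def by blast

lemma fo_nonneg:
  assumes "functionally_open X U"
  shows "\<exists>f. continuous_map X euclideanreal f \<and> (\<forall>x. 0 \<le> f x) \<and> (\<forall>x. x \<in> U \<longleftrightarrow> x \<in> topspace X \<and> f x \<noteq> 0)"
proof -
  obtain f where f: "continuous_map X euclideanreal f" "U = {x \<in> topspace X. f x \<noteq> 0}"
    using assms unfolding functionally_open_def by blast
  show ?thesis
    by (rule exI[of _ "\<lambda>x. \<bar>f x\<bar>"]) (use f in \<open>auto intro: continuous_map_real_abs\<close>)
qed

lemma vanish:
  assumes f: "continuous_map K euclideanreal f" and e: "continuous_map X K e"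
    and dense: "K closure_of (e ` topspace X) = topspace K"
    and z: "\<And>x. x \<in> topspace X \<Longrightarrow> f (e x) = 0" and p: "p \<in> topspace K"
  shows "f p = 0"
proof -
  have cl: "closedin K {q \<in> topspace K. f q \<in> {0}}"
    by (rule closedin_continuous_map_preimage[OF f]) auto
  have "e ` topspace X \<subseteq> {q \<in> topspace K. f q \<in> {0}}"
    using z e by (auto simp: continuous_map_def)
  then have "K closure_of (e ` topspace X) \<subseteq> {q \<in> topspace K. f q \<in> {0}}"
    using closure_of_minimal cl by blast
  then show ?thesis using p dense by auto
qed

lemma normalize:
  assumes fin: "finite \<U>" and cov: "fo_cover Y \<U>"
  shows "\<exists>h. (\<forall>U\<in>\<U>. continuous_map Y euclideanreal (h U) \<and> (\<forall>y. 0 \<le> h U y \<and> h U y \<le> 1)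
              \<and> (\<forall>y. y \<in> U \<longleftrightarrow> y \<in> topspace Y \<and> h U y \<noteq> 0)) \<and> (\<forall>y\<in>topspace Y. (\<Sum>U\<in>\<U>. h U y) = 1)"
proof -
  have "\<forall>U\<in>\<U>. \<exists>f. continuous_map Y euclideanreal f \<and> (\<forall>x. 0 \<le> f x) \<and> (\<forall>x. x \<in> U \<longleftrightarrow> x \<in> topspace Y \<and> f x \<noteq> 0)"
    using cov fo_nonneg unfolding fo_cover_def by blast
  from bchoice[OF this] obtain F where F0: "\<forall>U\<in>\<U>. continuous_map Y euclideanreal (F U) \<and> (\<forall>x. 0 \<le> F U x) \<and> (\<forall>x. x \<in> U \<longleftrightarrow> x \<in> topspace Y \<and> F U x \<noteq> 0)"
    by blast
  have F: "\<And>U. U \<in> \<U> \<Longrightarrow> continuous_map Y euclideanreal (F U)"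
    "\<And>U x. U \<in> \<U> \<Longrightarrow> 0 \<le> F U x"
    using F0 by blast+
  have F3: "x \<in> U \<longleftrightarrow> x \<in> topspace Y \<and> F U x \<noteq> 0" if "U \<in> \<U>" for U x
    using F0 that by blast
  define s where "s y = (\<Sum>U\<in>\<U>. F U y)" for y
  have spos: "s y > 0" if "y \<in> topspace Y" for y
  proof -
    have "y \<in> \<Union>\<U>" using cov that unfolding fo_cover_def by simp
    then obtain U where U: "U \<in> \<U>" "y \<in> U" by (rule UnionE)
    have "F U y \<noteq> 0" using U F3[OF U(1)] by simp
    then have "F U y > 0" using F(2)[OF U(1), of y] by linarith
    then have "0 < (\<Sum>U'\<in>\<U>. F U' y)" by (intro sum_pos2[OF fin U(1)]) (simp_all add: F(2))
    then show ?thesis by (simp add: s_def)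
  qed
  have Fle: "F U y \<le> s y" if "U \<in> \<U>" for U y
    unfolding s_def by (rule member_le_sum) (use that F(2) fin in auto)
  have scont: "continuous_map Y euclideanreal s"
    unfolding s_def by (intro continuous_map_sum fin F(1)) simp
  show ?thesis
  proof (rule exI[of _ "\<lambda>U y. F U y / s y"], intro conjI ballI allI)
    fix U assume U: "U \<in> \<U>"
    show "continuous_map Y euclideanreal (\<lambda>y. F U y / s y)"
      by (intro continuous_map_real_divide F(1) U scont) (use spos in force)
    fix y
    show "0 \<le> F U y / s y" using F(2)[OF U, of y] Fle[OF U, of y] by (intro divide_nonneg_nonneg) linarith+
    show "F U y / s y \<le> 1" using F(2)[OF U, of y] Fle[OF U, of y]
      by (cases "s y = 0") (auto simp: divide_le_eq)
    show "y \<in> U \<longleftrightarrow> y \<in> topspace Y \<and> F U y / s y \<noteq> 0"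
      using F3[OF U, of y] spos[of y] by auto
  next
    fix y assume y: "y \<in> topspace Y"
    have "(\<Sum>U\<in>\<U>. F U y / s y) = (\<Sum>U\<in>\<U>. F U y) / s y" by (rule sum_divide_distrib[symmetric])
    also have "\<dots> = 1" using spos[OF y] unfolding s_def by simp
    finally show "(\<Sum>U\<in>\<U>. F U y / s y) = 1" .
  qed
qed

lemma transfer_down:
  assumes fc: "finite_C_space X" and e: "continuous_map Y X e"
    and ext: "\<And>f. continuous_map Y euclideanreal f \<Longrightarrow> bounded (f ` topspace Y) \<Longrightarrow>
               \<exists>g. continuous_map X euclideanreal g \<and> (\<forall>y\<in>topspace Y. g (e y) = f y)"
  shows "finite_C_space Y"
  unfolding finite_C_space_def
proof (intro allI impI)
  fix \<omega> :: "nat \<Rightarrow> 'b set set"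
  assume \<omega>: "\<forall>n. finite (\<omega> n) \<and> fo_cover Y (\<omega> n)"
  show "\<exists>k \<gamma>. (\<forall>n<k. finite (\<gamma> n) \<and> pairwise disjnt (\<gamma> n) \<and>
                 (\<forall>G\<in>\<gamma> n. functionally_open Y G) \<and> refines (\<gamma> n) (\<omega> n)) \<and>
          (\<Union>n<k. \<Union>(\<gamma> n)) = topspace Y"
  proof (cases "topspace Y = {}")
    case True
    then show ?thesis by (intro exI[of _ 0]) auto
  next
    case False
    have "\<forall>n. \<exists>h. (\<forall>U\<in>\<omega> n. continuous_map Y euclideanreal (h U) \<and> (\<forall>y. 0 \<le> h U y \<and> h U y \<le> 1)
              \<and> (\<forall>y. y \<in> U \<longleftrightarrow> y \<in> topspace Y \<and> h U y \<noteq> 0)) \<and> (\<forall>y\<in>topspace Y. (\<Sum>U\<in>\<omega> n. h U y) = 1)"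
    proof
      fix n show "\<exists>h. (\<forall>U\<in>\<omega> n. continuous_map Y euclideanreal (h U) \<and> (\<forall>y. 0 \<le> h U y \<and> h U y \<le> 1)
              \<and> (\<forall>y. y \<in> U \<longleftrightarrow> y \<in> topspace Y \<and> h U y \<noteq> 0)) \<and> (\<forall>y\<in>topspace Y. (\<Sum>U\<in>\<omega> n. h U y) = 1)"
        by (rule normalize) (use \<omega> in auto)
    qed
    from choice[OF this] obtain H where H0: "\<forall>n. (\<forall>U\<in>\<omega> n. continuous_map Y euclideanreal (H n U) \<and> (\<forall>y. 0 \<le> H n U y \<and> H n U y \<le> 1)
              \<and> (\<forall>y. y \<in> U \<longleftrightarrow> y \<in> topspace Y \<and> H n U y \<noteq> 0)) \<and> (\<forall>y\<in>topspace Y. (\<Sum>U\<in>\<omega> n. H n U y) = 1)"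
      by blast
    have H: "\<And>n. (\<forall>U\<in>\<omega> n. continuous_map Y euclideanreal (H n U) \<and> (\<forall>y. 0 \<le> H n U y \<and> H n U y \<le> 1)
              \<and> (\<forall>y. y \<in> U \<longleftrightarrow> y \<in> topspace Y \<and> H n U y \<noteq> 0)) \<and> (\<forall>y\<in>topspace Y. (\<Sum>U\<in>\<omega> n. H n U y) = 1)"
      using H0 by blast
    have "\<forall>nU\<in>Sigma UNIV \<omega>. \<exists>g. continuous_map X euclideanreal g \<and> (\<forall>y\<in>topspace Y. g (e y) = H (fst nU) (snd nU) y)"
    proof
      fix nU assume nU: "nU \<in> Sigma UNIV \<omega>"
      obtain n U where nU': "nU = (n, U)" "U \<in> \<omega> n" using nU by auto
      have "bounded (H n U ` topspace Y)"
        unfolding bounded_iff using H[of n] nU' by (intro exI[of _ 1]) auto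
      then show "\<exists>g. continuous_map X euclideanreal g \<and> (\<forall>y\<in>topspace Y. g (e y) = H (fst nU) (snd nU) y)"
        using ext H[of n] nU' by auto
    qed
    from bchoice[OF this] obtain GG where GG: "\<forall>nU\<in>Sigma UNIV \<omega>. continuous_map X euclideanreal (GG nU) \<and> (\<forall>y\<in>topspace Y. GG nU (e y) = H (fst nU) (snd nU) y)"
      by blast
    define Gf where "Gf n U = GG (n, U)" for n U
    have Gc: "\<And>n U. U \<in> \<omega> n \<Longrightarrow> continuous_map X euclideanreal (Gf n U)"
      and Ge: "\<And>n U y. U \<in> \<omega> n \<Longrightarrow> y \<in> topspace Y \<Longrightarrow> Gf n U (e y) = H n U y"
      using GG unfolding Gf_def by auto
    define \<omega>' where "\<omega>' n = (\<lambda>U. {x \<in> topspace X. Gf n U x \<noteq> 0}) ` \<omega> n \<union>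
        {{x \<in> topspace X. (\<Sum>U\<in>\<omega> n. Gf n U x) - 1 \<noteq> 0}}" for n
    have \<omega>'ok: "\<forall>n. finite (\<omega>' n) \<and> fo_cover X (\<omega>' n)"
    proof
      fix n
      have fin: "finite (\<omega> n)" using \<omega> by blast
      have fo1: "functionally_open X {x \<in> topspace X. (\<Sum>U\<in>\<omega> n. Gf n U x) - 1 \<noteq> 0}"
        by (intro fo_intro continuous_map_diff continuous_map_sum fin Gc) auto
      have cov: "\<Union>(\<omega>' n) = topspace X"
      proof
        show "\<Union>(\<omega>' n) \<subseteq> topspace X" unfolding \<omega>'_def by auto
        show "topspace X \<subseteq> \<Union>(\<omega>' n)"
        proof
          fix x assume x: "x \<in> topspace X"
          show "x \<in> \<Union>(\<omega>' n)"
          proof (cases "(\<Sum>U\<in>\<omega> n. Gf n U x) = 1")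
            case True
            then obtain U where "U \<in> \<omega> n" "Gf n U x \<noteq> 0"
              by (metis (mono_tags, lifting) sum.neutral zero_neq_one)
            then show ?thesis using x unfolding \<omega>'_def by blast
          next
            case False
            then show ?thesis using x unfolding \<omega>'_def by auto
          qed
        qed
      qed
      show "finite (\<omega>' n) \<and> fo_cover X (\<omega>' n)"
        using fin fo1 cov unfolding \<omega>'_def fo_cover_def
        by (auto intro: fo_intro Gc)
    qed
    obtain k \<gamma> where \<gamma>: "\<forall>n<k. finite (\<gamma> n) \<and> pairwise disjnt (\<gamma> n) \<and>
                 (\<forall>G\<in>\<gamma> n. functionally_open X G) \<and> refines (\<gamma> n) (\<omega>' n)"
      and cov: "(\<Union>n<k. \<Union>(\<gamma> n)) = topspace X"
      by (rule exE[OF fc[unfolded finite_C_space_def, rule_format, OF \<omega>'ok[rule_format]]]) (elim exE conjE, rule that)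
    define \<gamma>' where "\<gamma>' n = (\<lambda>G. {y \<in> topspace Y. e y \<in> G}) ` \<gamma> n" for n
    have eY: "e y \<in> topspace X" if "y \<in> topspace Y" for y
      using e that by (auto simp: continuous_map_def)
    show ?thesis
    proof (intro exI[of _ k] exI[of _ \<gamma>'] conjI allI impI)
      fix n assume n: "n < k"
      show "finite (\<gamma>' n)" using \<gamma> n unfolding \<gamma>'_def by auto
      show "pairwise disjnt (\<gamma>' n)"
        unfolding pairwise_def
      proof (intro ballI impI)
        fix A B assume A: "A \<in> \<gamma>' n" and B: "B \<in> \<gamma>' n" and AB: "A \<noteq> B"
        obtain GA where GA: "GA \<in> \<gamma> n" "A = {y \<in> topspace Y. e y \<in> GA}" using A unfolding \<gamma>'_def by auto
        obtain GB where GB: "GB \<in> \<gamma> n" "B = {y \<in> topspace Y. e y \<in> GB}" using B unfolding \<gamma>'_def by auto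
        have "GA \<noteq> GB" using AB GA GB by auto
        then have "disjnt GA GB" using \<gamma> n GA GB unfolding pairwise_def by blast
        then show "disjnt A B" using GA GB unfolding disjnt_def by auto
      qed
      show "\<forall>G\<in>\<gamma>' n. functionally_open Y G"
      proof
        fix G' assume "G' \<in> \<gamma>' n"
        then obtain G where G: "G \<in> \<gamma> n" "G' = {y \<in> topspace Y. e y \<in> G}" unfolding \<gamma>'_def by auto
        then obtain \<phi> where \<phi>: "continuous_map X euclideanreal \<phi>" "G = {x \<in> topspace X. \<phi> x \<noteq> 0}"
          using \<gamma> n unfolding functionally_open_def by blast
        have "G' = {y \<in> topspace Y. (\<phi> \<circ> e) y \<noteq> 0}" using G(2) \<phi>(2) eY by auto
        then show "functionally_open Y G'"
          using fo_intro[OF continuous_map_compose[OF e \<phi>(1)]] by simp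
      qed
      show "refines (\<gamma>' n) (\<omega> n)"
        unfolding refines_def
      proof
        fix G' assume "G' \<in> \<gamma>' n"
        then obtain G where G: "G \<in> \<gamma> n" "G' = {y \<in> topspace Y. e y \<in> G}" unfolding \<gamma>'_def by auto
        then obtain W where W: "W \<in> \<omega>' n" "G \<subseteq> W" using \<gamma> n unfolding refines_def by blast
        show "\<exists>W\<in>\<omega> n. G' \<subseteq> W"
        proof (cases "W = {x \<in> topspace X. (\<Sum>U\<in>\<omega> n. Gf n U x) - 1 \<noteq> 0}")
          case True
          have "G' = {}"
          proof -
            have "y \<notin> G'" for y
            proof
              assume y: "y \<in> G'"
              then have yY: "y \<in> topspace Y" using G by auto
              have "(\<Sum>U\<in>\<omega> n. Gf n U (e y)) = (\<Sum>U\<in>\<omega> n. H n U y)"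
                using Ge yY by (intro sum.cong) auto
              also have "\<dots> = 1" using H[of n] yY by blast
              finally show False using y G W True by auto
            qed
            then show ?thesis by blast
          qed
          moreover obtain y where "y \<in> topspace Y" using False by blast
          then have "y \<in> \<Union>(\<omega> n)" using \<omega> by (simp add: fo_cover_def)
          then obtain U where "U \<in> \<omega> n" by blast
          ultimately show ?thesis by blast
        next
          case False
          then obtain U where U: "U \<in> \<omega> n" "W = {x \<in> topspace X. Gf n U x \<noteq> 0}"
            using W(1) False unfolding \<omega>'_def by auto
          have "G' \<subseteq> U"
          proof
            fix y assume y: "y \<in> G'"
            then have yY: "y \<in> topspace Y" using G by auto
            have "Gf n U (e y) \<noteq> 0" using y G W U by auto
            then have "H n U y \<noteq> 0" using Ge[OF U(1) yY] by simp
            then show "y \<in> U" using H[of n] U(1) yY by auto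
          qed
          then show ?thesis using U by blast
        qed
      qed
    next
      show "(\<Union>n<k. \<Union>(\<gamma>' n)) = topspace Y"
      proof
        show "(\<Union>n<k. \<Union>(\<gamma>' n)) \<subseteq> topspace Y" unfolding \<gamma>'_def by auto
        show "topspace Y \<subseteq> (\<Union>n<k. \<Union>(\<gamma>' n))"
        proof
          fix y assume y: "y \<in> topspace Y"
          have "e y \<in> (\<Union>n<k. \<Union>(\<gamma> n))" using cov eY[OF y] by simp
          then obtain n G where "n < k" "G \<in> \<gamma> n" "e y \<in> G" by blast
          then show "y \<in> (\<Union>n<k. \<Union>(\<gamma>' n))" using y unfolding \<gamma>'_def by blast
        qed
      qed
    qed
  qed
qed


lemma transfer_up:
  assumes fc: "finite_C_space X" and e: "continuous_map X K e"
    and dense: "K closure_of (e ` topspace X) = topspace K"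
    and ext: "\<And>f. continuous_map X euclideanreal f \<Longrightarrow> bounded (f ` topspace X) \<Longrightarrow>
               \<exists>g. continuous_map K euclideanreal g \<and> (\<forall>x\<in>topspace X. g (e x) = f x)"
  shows "finite_C_space K"
  unfolding finite_C_space_def
proof (intro allI impI)
  fix \<omega> :: "nat \<Rightarrow> 'b set set"
  assume \<omega>: "\<forall>n. finite (\<omega> n) \<and> fo_cover K (\<omega> n)"
  show "\<exists>k \<gamma>. (\<forall>n<k. finite (\<gamma> n) \<and> pairwise disjnt (\<gamma> n) \<and>
                 (\<forall>G\<in>\<gamma> n. functionally_open K G) \<and> refines (\<gamma> n) (\<omega> n)) \<and>
          (\<Union>n<k. \<Union>(\<gamma> n)) = topspace K"
  proof (cases "topspace K = {}")
    case True
    then show ?thesis by (intro exI[of _ 0]) auto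
  next
    case False
    have eX: "e x \<in> topspace K" if "x \<in> topspace X" for x
      using e that by (auto simp: continuous_map_def)
    have "\<forall>n. \<exists>h. (\<forall>U\<in>\<omega> n. continuous_map K euclideanreal (h U) \<and> (\<forall>y. 0 \<le> h U y \<and> h U y \<le> 1)
              \<and> (\<forall>y. y \<in> U \<longleftrightarrow> y \<in> topspace K \<and> h U y \<noteq> 0)) \<and> (\<forall>y\<in>topspace K. (\<Sum>U\<in>\<omega> n. h U y) = 1)"
    proof
      fix n show "\<exists>h. (\<forall>U\<in>\<omega> n. continuous_map K euclideanreal (h U) \<and> (\<forall>y. 0 \<le> h U y \<and> h U y \<le> 1)
              \<and> (\<forall>y. y \<in> U \<longleftrightarrow> y \<in> topspace K \<and> h U y \<noteq> 0)) \<and> (\<forall>y\<in>topspace K. (\<Sum>U\<in>\<omega> n. h U y) = 1)"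
        by (rule normalize) (use \<omega> in auto)
    qed
    from choice[OF this] obtain W where W0: "\<forall>n. (\<forall>U\<in>\<omega> n. continuous_map K euclideanreal (W n U) \<and> (\<forall>y. 0 \<le> W n U y \<and> W n U y \<le> 1)
              \<and> (\<forall>y. y \<in> U \<longleftrightarrow> y \<in> topspace K \<and> W n U y \<noteq> 0)) \<and> (\<forall>y\<in>topspace K. (\<Sum>U\<in>\<omega> n. W n U y) = 1)"
      by blast
    have Wc: "\<And>n U. U \<in> \<omega> n \<Longrightarrow> continuous_map K euclideanreal (W n U)"
      and Wnn: "\<And>n U y. U \<in> \<omega> n \<Longrightarrow> 0 \<le> W n U y"
      and Wm: "\<And>n U y. U \<in> \<omega> n \<Longrightarrow> y \<in> U \<longleftrightarrow> y \<in> topspace K \<and> W n U y \<noteq> 0"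
      and Ws: "\<And>n y. y \<in> topspace K \<Longrightarrow> (\<Sum>U\<in>\<omega> n. W n U y) = 1"
      using W0 by blast+
    have fin\<omega>: "\<And>n. finite (\<omega> n)" using \<omega> by blast
    define N where "N n = real (card (\<omega> n))" for n
    have big: "\<exists>U\<in>\<omega> n. 2 * N n * W n U p > 1" if p: "p \<in> topspace K" for n p
    proof (rule ccontr)
      assume "\<not> ?thesis"
      then have le: "\<And>U. U \<in> \<omega> n \<Longrightarrow> 2 * N n * W n U p \<le> 1" by (simp add: not_less)
      have "p \<in> \<Union>(\<omega> n)" using \<omega> p by (simp add: fo_cover_def)
      then have "\<omega> n \<noteq> {}" by blast
      then have Npos: "N n > 0" unfolding N_def using fin\<omega>[of n] by (simp add: card_gt_0_iff)
      have "\<And>U. U \<in> \<omega> n \<Longrightarrow> W n U p \<le> 1 / (2 * N n)"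
        using le Npos by (simp add: field_simps)
      then have "(\<Sum>U\<in>\<omega> n. W n U p) \<le> of_nat (card (\<omega> n)) * (1 / (2 * N n))"
        by (rule sum_bounded_above)
      also have "\<dots> = 1 / 2" using Npos unfolding N_def by simp
      finally show False using Ws[OF p, of n] by simp
    qed
    define V where "V n U x = max 0 (2 * N n * W n U (e x) - 1)" for n U x
    have Vc: "continuous_map X euclideanreal (V n U)" if "U \<in> \<omega> n" for n U
    proof -
      have "continuous_map X euclideanreal (\<lambda>x. W n U (e x))"
        using continuous_map_compose[OF e Wc[OF that]] by (simp add: o_def)
      then show ?thesis unfolding V_def
        by (intro continuous_map_real_max continuous_map_diff continuous_map_real_mult continuous_map_canonical_const)
    qed
    define \<omega>' where "\<omega>' n = (\<lambda>U. {x \<in> topspace X. V n U x \<noteq> 0}) ` \<omega> n" for n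
    have \<omega>'ok: "\<forall>n. finite (\<omega>' n) \<and> fo_cover X (\<omega>' n)"
    proof
      fix n
      have cov: "\<Union>(\<omega>' n) = topspace X"
      proof
        show "\<Union>(\<omega>' n) \<subseteq> topspace X" unfolding \<omega>'_def by auto
        show "topspace X \<subseteq> \<Union>(\<omega>' n)"
        proof
          fix x assume x: "x \<in> topspace X"
          obtain U where U: "U \<in> \<omega> n" "2 * N n * W n U (e x) > 1" using big[OF eX[OF x], of n] by blast
          then have "V n U x \<noteq> 0" unfolding V_def by simp
          then show "x \<in> \<Union>(\<omega>' n)" using x U(1) unfolding \<omega>'_def by blast
        qed
      qed
      show "finite (\<omega>' n) \<and> fo_cover X (\<omega>' n)"
        using fin\<omega>[of n] cov unfolding \<omega>'_def fo_cover_def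
        by (auto intro: fo_intro Vc)
    qed
    obtain k \<gamma> where \<gamma>: "\<forall>n<k. finite (\<gamma> n) \<and> pairwise disjnt (\<gamma> n) \<and>
                 (\<forall>G\<in>\<gamma> n. functionally_open X G) \<and> refines (\<gamma> n) (\<omega>' n)"
      and cov: "(\<Union>n<k. \<Union>(\<gamma> n)) = topspace X"
      by (rule exE[OF fc[unfolded finite_C_space_def, rule_format, OF \<omega>'ok[rule_format]]]) (elim exE conjE, rule that)
    define A where "A = (\<Union>n<k. \<gamma> n)"
    have finA: "finite A" unfolding A_def using \<gamma> by auto
    have covA: "fo_cover X A"
      unfolding fo_cover_def
    proof
      show "\<forall>U\<in>A. functionally_open X U" unfolding A_def using \<gamma> by auto
      have "\<Union>A = (\<Union>n<k. \<Union>(\<gamma> n))" unfolding A_def by blast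
      then show "\<Union>A = topspace X" using cov by simp
    qed
    obtain h where h0: "(\<forall>U\<in>A. continuous_map X euclideanreal (h U) \<and> (\<forall>y. 0 \<le> h U y \<and> h U y \<le> 1)
              \<and> (\<forall>y. y \<in> U \<longleftrightarrow> y \<in> topspace X \<and> h U y \<noteq> 0)) \<and> (\<forall>y\<in>topspace X. (\<Sum>U\<in>A. h U y) = 1)"
      using normalize[OF finA covA] by blast
    have hm: "\<And>G y. G \<in> A \<Longrightarrow> y \<in> G \<longleftrightarrow> y \<in> topspace X \<and> h G y \<noteq> 0"
      and hs: "\<And>y. y \<in> topspace X \<Longrightarrow> (\<Sum>U\<in>A. h U y) = 1"
      using h0 by blast+
    have "\<forall>G\<in>A. \<exists>g. continuous_map K euclideanreal g \<and> (\<forall>x\<in>topspace X. g (e x) = h G x)"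
    proof
      fix G assume G: "G \<in> A"
      have "bounded (h G ` topspace X)"
        unfolding bounded_iff using h0 G by (intro exI[of _ 1]) auto
      then show "\<exists>g. continuous_map K euclideanreal g \<and> (\<forall>x\<in>topspace X. g (e x) = h G x)"
        using ext h0 G by auto
    qed
    from bchoice[OF this] obtain g where g0: "\<forall>G\<in>A. continuous_map K euclideanreal (g G) \<and> (\<forall>x\<in>topspace X. g G (e x) = h G x)"
      by blast
    have gc: "\<And>G. G \<in> A \<Longrightarrow> continuous_map K euclideanreal (g G)"
      and ge: "\<And>G x. G \<in> A \<Longrightarrow> x \<in> topspace X \<Longrightarrow> g G (e x) = h G x"
      using g0 by blast+
    have inA: "G \<in> A" if "n < k" "G \<in> \<gamma> n" for n G
      unfolding A_def using that by blast
    define \<gamma>' where "\<gamma>' n = (\<lambda>G. {p \<in> topspace K. g G p \<noteq> 0}) ` \<gamma> n" for n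
    show ?thesis
    proof (intro exI[of _ k] exI[of _ \<gamma>'] conjI allI impI)
      fix n assume n: "n < k"
      show "finite (\<gamma>' n)" using \<gamma> n unfolding \<gamma>'_def by auto
      show "pairwise disjnt (\<gamma>' n)"
        unfolding pairwise_def
      proof (intro ballI impI)
        fix A' B' assume A': "A' \<in> \<gamma>' n" and B': "B' \<in> \<gamma>' n" and AB: "A' \<noteq> B'"
        obtain GA where GA: "GA \<in> \<gamma> n" "A' = {p \<in> topspace K. g GA p \<noteq> 0}" using A' unfolding \<gamma>'_def by auto
        obtain GB where GB: "GB \<in> \<gamma> n" "B' = {p \<in> topspace K. g GB p \<noteq> 0}" using B' unfolding \<gamma>'_def by auto
        have "GA \<noteq> GB" using AB GA GB by auto
        then have dj: "disjnt GA GB" using \<gamma> n GA GB unfolding pairwise_def by blast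
        have GAA: "GA \<in> A" and GBA: "GB \<in> A" using inA n GA GB by auto
        have z: "g GA p * g GB p = 0" if p: "p \<in> topspace K" for p
        proof (rule vanish[OF _ e dense _ p])
          show "continuous_map K euclideanreal (\<lambda>p. g GA p * g GB p)"
            by (intro continuous_map_real_mult gc GAA GBA)
          fix x assume x: "x \<in> topspace X"
          have "h GA x = 0 \<or> h GB x = 0"
            using dj hm[OF GAA, of x] hm[OF GBA, of x] x unfolding disjnt_def by blast
          then show "g GA (e x) * g GB (e x) = 0" using ge[OF GAA x] ge[OF GBA x] by auto
        qed
        show "disjnt A' B'" using GA GB z unfolding disjnt_def by auto
      qed
      show "\<forall>G\<in>\<gamma>' n. functionally_open K G"
        unfolding \<gamma>'_def using inA[OF n] by (auto intro: fo_intro gc)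
      show "refines (\<gamma>' n) (\<omega> n)"
        unfolding refines_def
      proof
        fix G' assume "G' \<in> \<gamma>' n"
        then obtain G where G: "G \<in> \<gamma> n" "G' = {p \<in> topspace K. g G p \<noteq> 0}" unfolding \<gamma>'_def by auto
        have GA: "G \<in> A" using inA n G by auto
        obtain W' where W': "W' \<in> \<omega>' n" "G \<subseteq> W'" using \<gamma> n G unfolding refines_def by blast
        then obtain U where U: "U \<in> \<omega> n" "W' = {x \<in> topspace X. V n U x \<noteq> 0}"
          unfolding \<omega>'_def by auto
        have z: "g G p * max 0 (1 - 2 * N n * W n U p) = 0" if p: "p \<in> topspace K" for p
        proof (rule vanish[OF _ e dense _ p])
          show "continuous_map K euclideanreal (\<lambda>p. g G p * max 0 (1 - 2 * N n * W n U p))"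
            by (intro continuous_map_real_mult continuous_map_real_max continuous_map_diff
                continuous_map_canonical_const gc GA Wc U(1))
          fix x assume x: "x \<in> topspace X"
          show "g G (e x) * max 0 (1 - 2 * N n * W n U (e x)) = 0"
          proof (cases "h G x = 0")
            case True
            then show ?thesis using ge[OF GA x] by simp
          next
            case False
            then have "x \<in> G" using hm[OF GA, of x] x by simp
            then have "x \<in> W'" using W'(2) by blast
            then have "V n U x \<noteq> 0" using U(2) by simp
            then have "2 * N n * W n U (e x) - 1 > 0" unfolding V_def by (simp add: max_def split: if_splits)
            then show ?thesis by simp
          qed
        qed
        have "G' \<subseteq> U"
        proof
          fix p assume p: "p \<in> G'"
          then have pK: "p \<in> topspace K" and gp: "g G p \<noteq> 0" using G(2) by auto
          have "max 0 (1 - 2 * N n * W n U p) = 0" using z[OF pK] gp by simp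
          then have "2 * N n * W n U p \<ge> 1" by (simp add: max_def split: if_splits)
          then have "W n U p \<noteq> 0" by auto
          then show "p \<in> U" using Wm[OF U(1)] pK by simp
        qed
        then show "\<exists>W\<in>\<omega> n. G' \<subseteq> W" using U(1) by blast
      qed
    next
      show "(\<Union>n<k. \<Union>(\<gamma>' n)) = topspace K"
      proof
        show "(\<Union>n<k. \<Union>(\<gamma>' n)) \<subseteq> topspace K" unfolding \<gamma>'_def by auto
        show "topspace K \<subseteq> (\<Union>n<k. \<Union>(\<gamma>' n))"
        proof
          fix p assume p: "p \<in> topspace K"
          have "(\<Sum>G\<in>A. g G p) - 1 = 0"
          proof (rule vanish[OF _ e dense _ p])
            show "continuous_map K euclideanreal (\<lambda>p. (\<Sum>G\<in>A. g G p) - 1)"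
              by (intro continuous_map_diff continuous_map_sum finA gc continuous_map_canonical_const) auto
            fix x assume x: "x \<in> topspace X"
            have "(\<Sum>G\<in>A. g G (e x)) = (\<Sum>G\<in>A. h G x)" using ge x by (intro sum.cong) auto
            then show "(\<Sum>G\<in>A. g G (e x)) - 1 = 0" using hs[OF x] by simp
          qed
          then have "(\<Sum>G\<in>A. g G p) \<noteq> 0" by simp
          then obtain G where G: "G \<in> A" "g G p \<noteq> 0" by (meson sum.neutral)
          then obtain n where n: "n < k" "G \<in> \<gamma> n" unfolding A_def by blast
          then have "{q \<in> topspace K. g G q \<noteq> 0} \<in> \<gamma>' n" unfolding \<gamma>'_def by blast
          then show "p \<in> (\<Union>n<k. \<Union>(\<gamma>' n))" using n(1) p G(2) by blast
        qed
      qed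
    qed
  qed
qed


lemma lf_compact_finite:
  assumes K: "compact_space K" and lf: "locally_finite_in K \<A>"
  shows "finite {U \<in> \<A>. U \<noteq> {}}"
proof -
  have sub: "\<Union>\<A> \<subseteq> topspace K" using lf unfolding locally_finite_in_def by blast
  have "\<forall>x\<in>topspace K. \<exists>V. openin K V \<and> x \<in> V \<and> finite {U \<in> \<A>. U \<inter> V \<noteq> {}}"
    using lf unfolding locally_finite_in_def by blast
  from bchoice[OF this] obtain Vf where Vf: "\<forall>x\<in>topspace K. openin K (Vf x) \<and> x \<in> Vf x \<and> finite {U \<in> \<A>. U \<inter> Vf x \<noteq> {}}"
    by blast
  have "(\<forall>U \<in> Vf ` topspace K. openin K U) \<and> topspace K \<subseteq> \<Union>(Vf ` topspace K)"
    using Vf by blast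
  then obtain F where F: "finite F" "F \<subseteq> Vf ` topspace K" "topspace K \<subseteq> \<Union>F"
    using K unfolding compact_space_alt by meson
  have "{U \<in> \<A>. U \<noteq> {}} \<subseteq> (\<Union>V\<in>F. {U \<in> \<A>. U \<inter> V \<noteq> {}})"
  proof
    fix U assume U: "U \<in> {U \<in> \<A>. U \<noteq> {}}"
    then obtain u where u: "u \<in> U" by blast
    then have "u \<in> topspace K" using sub U by blast
    then obtain V where "V \<in> F" "u \<in> V" using F(3) by blast
    then show "U \<in> (\<Union>V\<in>F. {U \<in> \<A>. U \<inter> V \<noteq> {}})" using U u by blast
  qed
  moreover have "finite (\<Union>V\<in>F. {U \<in> \<A>. U \<inter> V \<noteq> {}})"
  proof (rule finite_UN_I[OF F(1)])
    fix V assume "V \<in> F"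
    then obtain x where "x \<in> topspace K" "V = Vf x" using F(2) by blast
    then show "finite {U \<in> \<A>. U \<inter> V \<noteq> {}}" using Vf by blast
  qed
  ultimately show ?thesis by (rule finite_subset)
qed

lemma compact_fC_imp_C:
  assumes K: "compact_space K" and fc: "finite_C_space K"
  shows "C_space K"
  unfolding C_space_def
proof (intro allI impI)
  fix \<omega> :: "nat \<Rightarrow> 'a set set"
  assume \<omega>: "\<forall>n. fo_cover K (\<omega> n) \<and> locally_finite_in K (\<omega> n)"
  define \<omega>0 where "\<omega>0 n = {U \<in> \<omega> n. U \<noteq> {}}" for n
  have \<omega>0ok: "\<forall>n. finite (\<omega>0 n) \<and> fo_cover K (\<omega>0 n)"
  proof
    fix n
    have "finite (\<omega>0 n)" unfolding \<omega>0_def using lf_compact_finite[OF K] \<omega> by blast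
    moreover have "\<Union>(\<omega>0 n) = \<Union>(\<omega> n)" unfolding \<omega>0_def by auto
    ultimately show "finite (\<omega>0 n) \<and> fo_cover K (\<omega>0 n)"
      using \<omega>[rule_format, of n] unfolding fo_cover_def \<omega>0_def by auto
  qed
  obtain k \<gamma> where \<gamma>: "\<forall>n<k. finite (\<gamma> n) \<and> pairwise disjnt (\<gamma> n) \<and>
                 (\<forall>G\<in>\<gamma> n. functionally_open K G) \<and> refines (\<gamma> n) (\<omega>0 n)"
    and cov: "(\<Union>n<k. \<Union>(\<gamma> n)) = topspace K"
    by (rule exE[OF fc[unfolded finite_C_space_def, rule_format, OF \<omega>0ok[rule_format]]]) (elim exE conjE, rule that)
  define \<gamma>' where "\<gamma>' n = (if n < k then \<gamma> n else {})" for n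
  have U_eq: "(\<Union>n. \<gamma>' n) = (\<Union>n<k. \<gamma> n)" unfolding \<gamma>'_def by (auto split: if_splits)
  have fo: "\<forall>G\<in>(\<Union>n. \<gamma>' n). functionally_open K G" unfolding U_eq using \<gamma> by auto
  have un: "\<Union>(\<Union>n. \<gamma>' n) = topspace K"
  proof -
    have "\<Union>(\<Union>n. \<gamma>' n) = (\<Union>n<k. \<Union>(\<gamma> n))" unfolding U_eq by blast
    then show ?thesis using cov by simp
  qed
  show "\<exists>\<gamma>. (\<forall>n. pairwise disjnt (\<gamma> n) \<and> (\<forall>G\<in>\<gamma> n. openin K G) \<and> refines (\<gamma> n) (\<omega> n)) \<and>
          fo_cover K (\<Union>n. \<gamma> n) \<and> locally_finite_in K (\<Union>n. \<gamma> n)"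
  proof (intro exI[of _ \<gamma>'] conjI allI)
    fix n
    show "pairwise disjnt (\<gamma>' n)" unfolding \<gamma>'_def using \<gamma> by auto
    show "\<forall>G\<in>\<gamma>' n. openin K G" unfolding \<gamma>'_def using \<gamma> fo_open by auto
    show "refines (\<gamma>' n) (\<omega> n)" unfolding \<gamma>'_def refines_def using \<gamma> unfolding refines_def \<omega>0_def
      by (auto split: if_splits) blast
  next
    show "fo_cover K (\<Union>n. \<gamma>' n)" unfolding fo_cover_def using fo un by blast
  next
    have "finite (\<Union>n. \<gamma>' n)" unfolding U_eq using \<gamma> by auto
    then show "locally_finite_in K (\<Union>n. \<gamma>' n)"
      by (rule finite_imp_locally_finite_in) (use un in simp)
  qed
qed

lemma compact_C_imp_fC:
  assumes K: "compact_space K" and C: "C_space K"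
  shows "finite_C_space K"
  unfolding finite_C_space_def
proof (intro allI impI)
  fix \<omega> :: "nat \<Rightarrow> 'a set set"
  assume \<omega>: "\<forall>n. finite (\<omega> n) \<and> fo_cover K (\<omega> n)"
  have \<omega>ok: "\<forall>n. fo_cover K (\<omega> n) \<and> locally_finite_in K (\<omega> n)"
  proof
    fix n
    have fn: "finite (\<omega> n)" and cn: "fo_cover K (\<omega> n)" using \<omega> by simp_all
    have "\<Union>(\<omega> n) = topspace K" using cn unfolding fo_cover_def by (rule conjunct2)
    then have "\<Union>(\<omega> n) \<subseteq> topspace K" by simp
    with fn have "locally_finite_in K (\<omega> n)" by (rule finite_imp_locally_finite_in)
    with cn show "fo_cover K (\<omega> n) \<and> locally_finite_in K (\<omega> n)" by (rule conjI)
  qed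
  obtain \<gamma> where \<gamma>: "\<forall>n. pairwise disjnt (\<gamma> n) \<and> (\<forall>G\<in>\<gamma> n. openin K G) \<and> refines (\<gamma> n) (\<omega> n)"
    and fo: "fo_cover K (\<Union>n. \<gamma> n)"
    by (rule exE[OF C[unfolded C_space_def, rule_format, OF \<omega>ok[rule_format]]]) (elim exE conjE, rule that)
  have foG0: "\<forall>G \<in> (\<Union>n. \<gamma> n). functionally_open K G" using fo unfolding fo_cover_def by (rule conjunct1)
  then have foG: "\<And>G. G \<in> (\<Union>n. \<gamma> n) \<Longrightarrow> functionally_open K G" by (rule bspec)
  have unG: "\<Union>(\<Union>n. \<gamma> n) = topspace K" using fo unfolding fo_cover_def by (rule conjunct2)
  have "(\<forall>U \<in> (\<Union>n. \<gamma> n). openin K U) \<and> topspace K \<subseteq> \<Union>(\<Union>n. \<gamma> n)"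
  proof
    show "\<forall>U \<in> (\<Union>n. \<gamma> n). openin K U" using foG fo_open by blast
    show "topspace K \<subseteq> \<Union>(\<Union>n. \<gamma> n)" by (simp only: unG subset_refl)
  qed
  then obtain F where F: "finite F" "F \<subseteq> (\<Union>n. \<gamma> n)" "topspace K \<subseteq> \<Union>F"
    using K unfolding compact_space_alt by meson
  have "\<forall>G\<in>F. \<exists>n. G \<in> \<gamma> n" using F(2) by blast
  from bchoice[OF this] obtain idx where idx: "\<forall>G\<in>F. G \<in> \<gamma> (idx G)" by blast
  define k where "k = Suc (Max (idx ` F))"
  have idxk: "idx G < k" if "G \<in> F" for G
    unfolding k_def using F(1) that by (simp add: le_imp_less_Suc)
  show "\<exists>k \<gamma>. (\<forall>n<k. finite (\<gamma> n) \<and> pairwise disjnt (\<gamma> n) \<and>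
                 (\<forall>G\<in>\<gamma> n. functionally_open K G) \<and> refines (\<gamma> n) (\<omega> n)) \<and>
          (\<Union>n<k. \<Union>(\<gamma> n)) = topspace K"
  proof (intro exI[of _ k] exI[of _ "\<lambda>n. \<gamma> n \<inter> F"] conjI allI impI)
    fix n assume n: "n < k"
    show "finite (\<gamma> n \<inter> F)" using F(1) by simp
    show "pairwise disjnt (\<gamma> n \<inter> F)" using \<gamma> pairwise_subset by (metis inf_le1)
    show "\<forall>G\<in>\<gamma> n \<inter> F. functionally_open K G" using foG by blast
    show "refines (\<gamma> n \<inter> F) (\<omega> n)" using \<gamma> unfolding refines_def by blast
  next
    show "(\<Union>n<k. \<Union>(\<gamma> n \<inter> F)) = topspace K"
    proof
      show "(\<Union>n<k. \<Union>(\<gamma> n \<inter> F)) \<subseteq> topspace K"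
        using foG fo_subset by blast
      show "topspace K \<subseteq> (\<Union>n<k. \<Union>(\<gamma> n \<inter> F))"
      proof
        fix p assume "p \<in> topspace K"
        then obtain G where G: "G \<in> F" "p \<in> G" using F(3) by blast
        then show "p \<in> (\<Union>n<k. \<Union>(\<gamma> n \<inter> F))" using idx idxk[OF G(1)] by blast
      qed
    qed
  qed
qed


theorem proposition2p2:
  fixes X :: "'a topology"
  assumes "Tychonoff_space X"
  shows "(\<forall>Y. finite_C_space X \<and> C_star_embedded X Y \<longrightarrow> finite_C_space (subtopology X Y)) \<and>
         (\<forall>(K :: 'b topology) e. Cech_Stone_compactification X K e \<longrightarrow>
            (finite_C_space X \<longleftrightarrow> C_space K))"
proof (intro conjI allI impI)
  fix Y assume a: "finite_C_space X \<and> C_star_embedded X Y"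
  then have fc: "finite_C_space X" and cs: "C_star_embedded X Y" by simp_all
  have YX: "Y \<subseteq> topspace X" using cs unfolding C_star_embedded_def by (rule conjunct1)
  have tY: "topspace (subtopology X Y) = Y" using YX by (simp add: Int_absorb1)
  have extall: "\<forall>f. continuous_map (subtopology X Y) euclideanreal f \<and> bounded (f ` Y) \<longrightarrow>
        (\<exists>g. continuous_map X euclideanreal g \<and> bounded (g ` topspace X) \<and> (\<forall>y\<in>Y. g y = f y))"
    using cs unfolding C_star_embedded_def by (rule conjunct2)
  show "finite_C_space (subtopology X Y)"
  proof (rule transfer_down[OF fc, of _ id])
    show "continuous_map (subtopology X Y) X id" by simp
    fix f assume f: "continuous_map (subtopology X Y) euclideanreal f" "bounded (f ` topspace (subtopology X Y))"
    have fb: "bounded (f ` Y)" using f(2) tY by simp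
    obtain g where g: "continuous_map X euclideanreal g" "\<forall>y\<in>Y. g y = f y"
      using extall f(1) fb by blast
    show "\<exists>g. continuous_map X euclideanreal g \<and> (\<forall>y\<in>topspace (subtopology X Y). g (id y) = f y)"
      using g tY by auto
  qed
next
  fix K :: "'b topology" and e
  assume CS: "Cech_Stone_compactification X K e"
  have comp: "compact_space K" and emb: "embedding_map X K e"
    and dense: "K closure_of (e ` topspace X) = topspace K"
    and ext: "\<forall>f. continuous_map X euclideanreal f \<and> bounded (f ` topspace X) \<longrightarrow>
        (\<exists>g. continuous_map K euclideanreal g \<and> (\<forall>x\<in>topspace X. g (e x) = f x))"
    using CS unfolding Cech_Stone_compactification_def by blast+
  have ec: "continuous_map X K e"
    using homeomorphic_imp_continuous_map[OF emb[unfolded embedding_map_def]]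
    by (simp add: continuous_map_in_subtopology)
  have ext': "\<And>f. continuous_map X euclideanreal f \<Longrightarrow> bounded (f ` topspace X) \<Longrightarrow>
        \<exists>g. continuous_map K euclideanreal g \<and> (\<forall>x\<in>topspace X. g (e x) = f x)"
    using ext by blast
  show "finite_C_space X \<longleftrightarrow> C_space K"
  proof
    assume fc: "finite_C_space X"
    show "C_space K" by (rule compact_fC_imp_C[OF comp transfer_up[OF fc ec dense ext']])
  next
    assume C: "C_space K"
    show "finite_C_space X" by (rule transfer_down[OF compact_C_imp_fC[OF comp C] ec ext'])
  qed
qed

end
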